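(* Let $P$ be a poset with an $\mathbb{R}$-action $\Lambda$. Let $I,J$ be intervals of $P$ and $\epsilon\ge0$ with $I\subseteq\mathrm{Ex}^\Lambda_\epsilon(J)$ and $J\subseteq\mathrm{Ex}^\Lambda_\epsilon(I)$. Then the interval modules $k_I$ and $k_J$ are $\Lambda_\epsilon$-interleaved.
   Context: Let $k$ be a field. A $P$-persistence module $V$ is a functor from the poset $P$ (as a category) to $k$-vector spaces, with spaces $V_p$ and maps $V(p,q)$ for $p\le q$; morphisms are natural transformations. An interval of $P$ is a nonempty convex and connected subset (convex: $p,q\in I$, $p\le r\le q$ imply $r\in I$; connected: any two elements are joined by a finite sequence in $I$ with consecutive ones comparable). The interval module $k_I$ is $k$ on $I$ and $0$ elsewhere, with identity maps within $I$ and zero maps otherwise. For $A\subseteq P$ nonempty, $A^\uparrow=\{p:\exists a\in A,\ a\le p\}$ and $A^\downarrow=\{p:\exists a\in A,\ p\le a\}$; $\emptyset^\uparrow=\emptyset^\downarrow=P$. An $\mathbb{R}$-action on $P$ is a family $\{\Lambda_\epsilon\}_{\epsilon\ge0}$ of poset automorphisms with $p\le\Lambda_\epsilon(p)$, $\Lambda_0=\mathrm{id}$ and $\Lambda_\epsilon\Lambda_\zeta=\Lambda_{\epsilon+\zeta}$. $\mathrm{Ex}^\Lambda_\epsilon(A)=\Lambda_\epsilon^{-1}(A)^\uparrow\cap\Lambda_\epsilon(A)^\downarrow$, with $\Lambda_\epsilon^{-1}(A)$ the preimage. Shifts and interleavings: - $V(\epsilon)_p=V_{\Lambda_\epsilon(p)}$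 and $V(\epsilon)(p,q)=V(\Lambda_\epsilon p,\Lambda_\epsilon q)$; - for a morphism $\phi$, $\phi(\epsilon)$ has components $\phi_{\Lambda_\epsilon(p)}$; - $V_{0\to\epsilon}\colon V\to V(\epsilon)$ has components $V(p,\Lambda_\epsilon p)$; - $V$ and $W$ are $\Lambda_\epsilon$-interleaved if there exist $\alpha\colon V\to W(\epsilon)$ and $\beta\colon W\to V(\epsilon)$ with $\beta(\epsilon)\alpha=V_{0\to2\epsilon}$ and $\alpha(\epsilon)\beta=W_{0\to2\epsilon}$. *)

theory Defs
  imports Complex_Main
begin

definition convex_set :: "'p::order set \<Rightarrow> bool" where
  "convex_set I \<longleftrightarrow> (\<forall>p\<in>I. \<forall>q\<in>I. \<forall>r. p \<le> r \<and> r \<le> q \<longrightarrow> r \<in> I)"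

definition connected_set :: "'p::order set \<Rightarrow> bool" where
  "connected_set I \<longleftrightarrow> (\<forall>p\<in>I. \<forall>q\<in>I. \<exists>xs. xs \<noteq> [] \<and> hd xs = p \<and> last xs = q \<and> set xs \<subseteq> I \<and>
      (\<forall>i. Suc i < length xs \<longrightarrow> xs ! i \<le> xs ! Suc i \<or> xs ! Suc i \<le> xs ! i))"

definition is_interval :: "'p::order set \<Rightarrow> bool" where
  "is_interval I \<longleftrightarrow> I \<noteq> {} \<and> convex_set I \<and> connected_set I"

definition upset :: "'p::order set \<Rightarrow> 'p set" where
  "upset A = (if A = {} then UNIV else {p. \<exists>a\<in>A. a \<le> p})"

definition downset :: "'p::order set \<Rightarrow> 'p set" where
  "downset A = (if A = {} then UNIV else {p. \<exists>a\<in>A. p \<le> a})"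

definition poset_automorphism :: "('p::order \<Rightarrow> 'p) \<Rightarrow> bool" where
  "poset_automorphism f \<longleftrightarrow> bij f \<and> (\<forall>p q. p \<le> q \<longleftrightarrow> f p \<le> f q)"

text \<open>An R-action: the family is indexed by nonnegative reals; values at negative reals are irrelevant.\<close>
definition R_action :: "(real \<Rightarrow> 'p::order \<Rightarrow> 'p) \<Rightarrow> bool" where
  "R_action \<Lambda> \<longleftrightarrow>
     (\<forall>e\<ge>0. poset_automorphism (\<Lambda> e)) \<and>
     (\<forall>e\<ge>0. \<forall>p. p \<le> \<Lambda> e p) \<and>
     \<Lambda> 0 = id \<and>
     (\<forall>e\<ge>0. \<forall>z\<ge>0. \<Lambda> e \<circ> \<Lambda> z = \<Lambda> (e + z))"

definition Ex_set :: "(real \<Rightarrow> 'p::order \<Rightarrow> 'p) \<Rightarrow> real \<Rightarrow> 'p set \<Rightarrow> 'p set" where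
  "Ex_set \<Lambda> e A = upset (\<Lambda> e -` A) \<inter> downset (\<Lambda> e ` A)"

text \<open>A persistence module is given by a family of subspaces V p of an ambient
  k-vector space (with scalar multiplication scale) and structure maps F p q.\<close>

definition lin_on :: "('k::field \<Rightarrow> 'v::ab_group_add \<Rightarrow> 'v) \<Rightarrow> ('k \<Rightarrow> 'w::ab_group_add \<Rightarrow> 'w)
     \<Rightarrow> 'v set \<Rightarrow> 'w set \<Rightarrow> ('v \<Rightarrow> 'w) \<Rightarrow> bool" where
  "lin_on sv sw A B f \<longleftrightarrow> (\<forall>x\<in>A. f x \<in> B) \<and>
     (\<forall>x\<in>A. \<forall>y\<in>A. f (x + y) = f x + f y) \<and> (\<forall>c. \<forall>x\<in>A. f (sv c x) = sw c (f x))"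

definition is_subspace :: "('k::field \<Rightarrow> 'v::ab_group_add \<Rightarrow> 'v) \<Rightarrow> 'v set \<Rightarrow> bool" where
  "is_subspace s A \<longleftrightarrow> 0 \<in> A \<and> (\<forall>x\<in>A. \<forall>y\<in>A. x + y \<in> A) \<and> (\<forall>c. \<forall>x\<in>A. s c x \<in> A)"

definition is_pmod :: "('k::field \<Rightarrow> 'v::ab_group_add \<Rightarrow> 'v) \<Rightarrow> ('p::order \<Rightarrow> 'v set)
     \<Rightarrow> ('p \<Rightarrow> 'p \<Rightarrow> 'v \<Rightarrow> 'v) \<Rightarrow> bool" where
  "is_pmod s V F \<longleftrightarrow> vector_space s \<and> (\<forall>p. is_subspace s (V p)) \<and>
     (\<forall>p q. p \<le> q \<longrightarrow> lin_on s s (V p) (V q) (F p q)) \<and>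
     (\<forall>p. \<forall>x\<in>V p. F p p x = x) \<and>
     (\<forall>p q r. p \<le> q \<and> q \<le> r \<longrightarrow> (\<forall>x\<in>V p. F q r (F p q x) = F p r x))"

definition is_pmor :: "('k::field \<Rightarrow> 'v::ab_group_add \<Rightarrow> 'v) \<Rightarrow> ('k \<Rightarrow> 'w::ab_group_add \<Rightarrow> 'w)
     \<Rightarrow> ('p::order \<Rightarrow> 'v set) \<Rightarrow> ('p \<Rightarrow> 'p \<Rightarrow> 'v \<Rightarrow> 'v)
     \<Rightarrow> ('p \<Rightarrow> 'w set) \<Rightarrow> ('p \<Rightarrow> 'p \<Rightarrow> 'w \<Rightarrow> 'w) \<Rightarrow> ('p \<Rightarrow> 'v \<Rightarrow> 'w) \<Rightarrow> bool" where
  "is_pmor sv sw V F W G \<phi> \<longleftrightarrow> (\<forall>p. lin_on sv sw (V p) (W p) (\<phi> p)) \<and>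
     (\<forall>p q. p \<le> q \<longrightarrow> (\<forall>x\<in>V p. \<phi> q (F p q x) = G p q (\<phi> p x)))"

text \<open>Shifts: V(e)_p = V_{Lambda_e p}, V(e)(p,q) = V(Lambda_e p, Lambda_e q); phi(e)_p = phi_{Lambda_e p};
  V_{0->e}_p = V(p, Lambda_e p).\<close>
definition shift_sp :: "(real \<Rightarrow> 'p \<Rightarrow> 'p) \<Rightarrow> real \<Rightarrow> ('p \<Rightarrow> 'v set) \<Rightarrow> 'p \<Rightarrow> 'v set" where
  "shift_sp \<Lambda> e V = (\<lambda>p. V (\<Lambda> e p))"

definition shift_map :: "(real \<Rightarrow> 'p \<Rightarrow> 'p) \<Rightarrow> real \<Rightarrow> ('p \<Rightarrow> 'p \<Rightarrow> 'v \<Rightarrow> 'v) \<Rightarrow> 'p \<Rightarrow> 'p \<Rightarrow> 'v \<Rightarrow> 'v" where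
  "shift_map \<Lambda> e F = (\<lambda>p q. F (\<Lambda> e p) (\<Lambda> e q))"

definition shift_mor :: "(real \<Rightarrow> 'p \<Rightarrow> 'p) \<Rightarrow> real \<Rightarrow> ('p \<Rightarrow> 'v \<Rightarrow> 'w) \<Rightarrow> 'p \<Rightarrow> 'v \<Rightarrow> 'w" where
  "shift_mor \<Lambda> e \<phi> = (\<lambda>p. \<phi> (\<Lambda> e p))"

definition shift_unit :: "(real \<Rightarrow> 'p \<Rightarrow> 'p) \<Rightarrow> real \<Rightarrow> ('p \<Rightarrow> 'p \<Rightarrow> 'v \<Rightarrow> 'v) \<Rightarrow> 'p \<Rightarrow> 'v \<Rightarrow> 'v" where
  "shift_unit \<Lambda> e F = (\<lambda>p. F p (\<Lambda> e p))"

text \<open>Lambda_e-interleaving. Equality of morphisms means equality of components on each V p.\<close>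
definition interleaved :: "('k::field \<Rightarrow> 'v::ab_group_add \<Rightarrow> 'v) \<Rightarrow> ('k \<Rightarrow> 'w::ab_group_add \<Rightarrow> 'w)
     \<Rightarrow> (real \<Rightarrow> 'p::order \<Rightarrow> 'p) \<Rightarrow> real
     \<Rightarrow> ('p \<Rightarrow> 'v set) \<Rightarrow> ('p \<Rightarrow> 'p \<Rightarrow> 'v \<Rightarrow> 'v)
     \<Rightarrow> ('p \<Rightarrow> 'w set) \<Rightarrow> ('p \<Rightarrow> 'p \<Rightarrow> 'w \<Rightarrow> 'w) \<Rightarrow> bool" where
  "interleaved sv sw \<Lambda> e V F W G \<longleftrightarrow>
     (\<exists>\<alpha> \<beta>. is_pmor sv sw V F (shift_sp \<Lambda> e W) (shift_map \<Lambda> e G) \<alpha> \<and>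
            is_pmor sw sv W G (shift_sp \<Lambda> e V) (shift_map \<Lambda> e F) \<beta> \<and>
            (\<forall>p. \<forall>x\<in>V p. shift_mor \<Lambda> e \<beta> p (\<alpha> p x) = shift_unit \<Lambda> (2 * e) F p x) \<and>
            (\<forall>p. \<forall>x\<in>W p. shift_mor \<Lambda> e \<alpha> p (\<beta> p x) = shift_unit \<Lambda> (2 * e) G p x))"

definition imod_sp :: "'p set \<Rightarrow> 'p \<Rightarrow> 'k::field set" where
  "imod_sp I p = (if p \<in> I then UNIV else {0})"

definition imod_map :: "'p set \<Rightarrow> 'p \<Rightarrow> 'p \<Rightarrow> 'k::field \<Rightarrow> 'k" where
  "imod_map I p q = (if p \<in> I \<and> q \<in> I then id else (\<lambda>_. 0))"

end

theory Submission
  imports Defs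
begin

lemma pmor_aux:
  assumes K1: "\<And>p q. p\<in>I \<Longrightarrow> q\<in>I \<Longrightarrow> p\<le>q \<Longrightarrow> L q\<in>J \<Longrightarrow> L p\<in>J"
    and K2: "\<And>p q. p\<in>I \<Longrightarrow> p\<le>q \<Longrightarrow> L p\<in>J \<Longrightarrow> L q\<in>J \<Longrightarrow> q\<in>I"
  shows "is_pmor ((*)::'k::field\<Rightarrow>_) (*) (imod_sp I) (imod_map I)
     (\<lambda>p. imod_sp J (L p)) (\<lambda>p q. imod_map J (L p) (L q))
     (\<lambda>p x. if p\<in>I \<and> L p\<in>J then x else 0)"
  unfolding is_pmor_def
proof (intro conjI allI impI ballI)
  fix p
  show "lin_on ((*)::'k\<Rightarrow>_) (*) (imod_sp I p) (imod_sp J (L p)) (\<lambda>x. if p\<in>I \<and> L p\<in>J then x else 0)"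
    unfolding lin_on_def imod_sp_def by auto
next
  fix p q and x :: 'k assume pq: "p \<le> q" and x: "x \<in> imod_sp I p"
  show "(if q\<in>I \<and> L q\<in>J then imod_map I p q x else 0) =
        imod_map J (L p) (L q) (if p\<in>I \<and> L p\<in>J then x else 0)"
  proof (cases "p \<in> I")
    case False
    then have "x = 0" using x unfolding imod_sp_def by simp
    then show ?thesis unfolding imod_map_def by simp
  next
    case pI: True
    show ?thesis
    proof (cases "q \<in> I")
      case True
      then show ?thesis using K1[OF pI True pq] unfolding imod_map_def by auto
    next
      case False
      then show ?thesis using K2[OF pI pq] pI unfolding imod_map_def by auto
    qed
  qed
qed

lemma comp_aux:
  assumes K3: "\<And>p. p\<in>I \<Longrightarrow> L (L p) \<in> I \<Longrightarrow> L p \<in> J"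
  shows "\<forall>p. \<forall>x\<in>(imod_sp I p :: 'k::field set).
     (if L p\<in>J \<and> L (L p)\<in>I then (if p\<in>I \<and> L p\<in>J then x else 0) else 0)
      = imod_map I p (L (L p)) x"
proof (intro allI ballI)
  fix p and x :: 'k assume x: "x \<in> imod_sp I p"
  show "(if L p\<in>J \<and> L (L p)\<in>I then (if p\<in>I \<and> L p\<in>J then x else 0) else 0)
      = imod_map I p (L (L p)) x"
  proof (cases "p \<in> I")
    case False
    then have "x = 0" using x unfolding imod_sp_def by simp
    then show ?thesis unfolding imod_map_def by simp
  next
    case True
    then show ?thesis using K3[OF True] unfolding imod_map_def by auto
  qed
qed

lemma convD: "convex_set A \<Longrightarrow> x\<in>A \<Longrightarrow> y\<in>A \<Longrightarrow> x \<le> r \<Longrightarrow> r \<le> y \<Longrightarrow> r\<in>A"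
  unfolding convex_set_def by blast

theorem proposition2p17:
  fixes \<Lambda> :: "real \<Rightarrow> 'p::order \<Rightarrow> 'p" and I J :: "'p set" and e :: real
  assumes "R_action \<Lambda>"
    and "is_interval I" and "is_interval J"
    and "e \<ge> 0"
    and "I \<subseteq> Ex_set \<Lambda> e J" and "J \<subseteq> Ex_set \<Lambda> e I"
  shows "interleaved ((*) :: 'k::field \<Rightarrow> 'k \<Rightarrow> 'k) ((*) :: 'k \<Rightarrow> 'k \<Rightarrow> 'k) \<Lambda> e
           (imod_sp I) (imod_map I) (imod_sp J) (imod_map J)"
proof -
  define L where "L = \<Lambda> e"
  have RA: "\<forall>e\<ge>0. poset_automorphism (\<Lambda> e)" "\<forall>e\<ge>0. \<forall>z\<ge>0. \<Lambda> e \<circ> \<Lambda> z = \<Lambda> (e + z)"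
    using assms(1) unfolding R_action_def by blast+
  have aut: "poset_automorphism L" using RA(1) assms(4) unfolding L_def by blast
  have ord: "\<And>p q. p \<le> q \<longleftrightarrow> L p \<le> L q" using aut unfolding poset_automorphism_def by blast
  have sL: "surj L" using aut unfolding poset_automorphism_def by (simp add: bij_is_surj)
  have sj: "\<And>y. \<exists>x. L x = y" using surjD[OF sL] by metis
  have LL: "\<Lambda> (2*e) = (\<lambda>p. L (L p))"
  proof -
    have h: "\<Lambda> e \<circ> \<Lambda> e = \<Lambda> (e + e)" using RA(2) assms(4) by blast
    have "\<Lambda> (2*e) = \<Lambda> e \<circ> \<Lambda> e" unfolding mult_2 using h by (rule sym)
    then show ?thesis unfolding L_def comp_def .
  qed
  have cI: "convex_set I" and cJ: "convex_set J" and nI: "I \<noteq> {}" and nJ: "J \<noteq> {}"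
    using assms(2,3) unfolding is_interval_def by auto
  have ExI: "\<And>A B. A \<noteq> {} \<Longrightarrow> B \<subseteq> Ex_set \<Lambda> e A \<Longrightarrow> p \<in> B \<Longrightarrow>
        (\<exists>a. L a \<in> A \<and> a \<le> p) \<and> (\<exists>c\<in>A. p \<le> L c)" for p
  proof -
    fix A B assume nA: "A \<noteq> {}" and BA: "B \<subseteq> Ex_set \<Lambda> e A" and pB: "p \<in> B"
    obtain a0 where a0: "a0 \<in> A" using nA by blast
    obtain x0 where "L x0 = a0" using sj by blast
    then have "x0 \<in> L -` A" using a0 by simp
    then have n1: "L -` A \<noteq> {}" by blast
    have n2: "L ` A \<noteq> {}" using nA by simp
    have "p \<in> Ex_set \<Lambda> e A" using BA pB by blast
    then have "p \<in> upset (L -` A)" "p \<in> downset (L ` A)"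
      unfolding Ex_set_def L_def by simp_all
    then show "(\<exists>a. L a \<in> A \<and> a \<le> p) \<and> (\<exists>c\<in>A. p \<le> L c)"
      unfolding upset_def downset_def using n1 n2 by auto
  qed
  have gen: "\<And>A B. convex_set A \<Longrightarrow> convex_set B \<Longrightarrow> A \<noteq> {} \<Longrightarrow> B \<noteq> {} \<Longrightarrow>
      B \<subseteq> Ex_set \<Lambda> e A \<Longrightarrow> A \<subseteq> Ex_set \<Lambda> e B \<Longrightarrow>
      (\<forall>p q. p\<in>B \<longrightarrow> q\<in>B \<longrightarrow> p\<le>q \<longrightarrow> L q\<in>A \<longrightarrow> L p\<in>A) \<and>
      (\<forall>p q. p\<in>B \<longrightarrow> p\<le>q \<longrightarrow> L p\<in>A \<longrightarrow> L q\<in>A \<longrightarrow> q\<in>B) \<and>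
      (\<forall>p. p\<in>B \<longrightarrow> L (L p) \<in> B \<longrightarrow> L p \<in> A)"
  proof (intro conjI allI impI)
    fix A B assume cA: "convex_set A" and cB: "convex_set B" and nA: "A \<noteq> {}" and nB: "B \<noteq> {}"
      and BA: "B \<subseteq> Ex_set \<Lambda> e A" and AB: "A \<subseteq> Ex_set \<Lambda> e B"
    {
      fix p q assume h: "p\<in>B" "q\<in>B" "p\<le>q" "L q\<in>A"
      obtain a where a: "L a \<in> A" "a \<le> p" using ExI[OF nA BA h(1)] by blast
      have "L a \<le> L p" using ord a(2) by (rule iffD1)
      moreover have "L p \<le> L q" using ord h(3) by (rule iffD1)
      ultimately show "L p \<in> A" using convD[OF cA a(1) h(4)] by blast
    next
      fix p q assume h: "p\<in>B" "p\<le>q" "L p\<in>A" "L q\<in>A"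
      obtain b where b: "b\<in>B" "L q \<le> L b" using ExI[OF nB AB h(4)] by blast
      have "q \<le> b" using ord b(2) by (rule iffD2)
      then show "q \<in> B" using convD[OF cB h(1) b(1) h(2)] by blast
    next
      fix p assume h: "p\<in>B" "L (L p) \<in> B"
      obtain a where a: "L a \<in> A" "a \<le> p" using ExI[OF nA BA h(1)] by blast
      obtain c where c: "c \<in> A" "L (L p) \<le> L c" using ExI[OF nA BA h(2)] by blast
      have "L a \<le> L p" using ord a(2) by (rule iffD1)
      moreover have "L p \<le> c" using ord c(2) by (rule iffD2)
      ultimately show "L p \<in> A" using convD[OF cA a(1) c(1)] by blast
    }
  qed
  note g1 = gen[OF cJ cI nJ nI assms(5,6)]
  note g2 = gen[OF cI cJ nI nJ assms(6,5)]
  show ?thesis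
    unfolding interleaved_def shift_sp_def shift_map_def shift_mor_def shift_unit_def LL
    unfolding L_def[symmetric]
    apply (rule exI[of _ "\<lambda>p x. if p\<in>I \<and> L p\<in>J then x else 0"])
    apply (rule exI[of _ "\<lambda>p x. if p\<in>J \<and> L p\<in>I then x else 0"])
    apply (intro conjI)
       apply (rule pmor_aux[of I L J]) using g1 apply blast using g1 apply blast
      apply (rule pmor_aux[of J L I]) using g2 apply blast using g2 apply blast
     apply (rule comp_aux[of I L J]) using g1 apply blast
    apply (rule comp_aux[of J L I]) using g2 apply blast
    done
qed

end
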